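(* Let $a,b$ be integers with $0<b<a$, let $S=\langle a,a+1,\ldots,a+b\rangle$ with conductor $c$, let $m\ge 2c-1$ and let $t\in\{1,\ldots,a+b-1\}$. Then $$\sharp\mathrm D(m,m+1,\ldots,m+t)=\sharp\mathrm D(m)+\sum_{j=1}^{t}\left\lceil\frac{a+b-j}{b}\right\rceil.$$
   Context: The conductor $c$ of a numerical semigroup $S$ is the least element of $S$ with $c+n\in S$ for all $n\in\mathbb N$. For $x\in S$, $\mathrm D(x)=\{\alpha\in S\mid x-\alpha\in S\}$, and $\mathrm D(x_1,\ldots,x_t)=\mathrm D(x_1)\cup\cdots\cup\mathrm D(x_t)$. *)

theory Defs
  imports Complex_Main
begin

inductive_set gen_semigroup :: "nat set \<Rightarrow> nat set" for G :: "nat set" where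
  zero: "0 \<in> gen_semigroup G"
| add: "x \<in> gen_semigroup G \<Longrightarrow> g \<in> G \<Longrightarrow> x + g \<in> gen_semigroup G"

definition conductor :: "nat set \<Rightarrow> nat" where
  "conductor S = (LEAST c. c \<in> S \<and> (\<forall>n. c + n \<in> S))"

text \<open>D(x) = {alpha in S | x - alpha in S} (integer subtraction, so alpha \<le> x).\<close>
definition Dset :: "nat set \<Rightarrow> nat \<Rightarrow> nat set" where
  "Dset S x = {\<alpha> \<in> S. \<alpha> \<le> x \<and> x - \<alpha> \<in> S}"

definition Dmulti :: "nat set \<Rightarrow> nat set \<Rightarrow> nat set" where
  "Dmulti S X = (\<Union>x\<in>X. Dset S x)"

end

theory Submission
  imports Defs
begin

lemma memS_imp:
  assumes "x \<in> gen_semigroup {a..a+b}"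
  shows "\<exists>k::nat. k*a \<le> x \<and> x \<le> k*(a+b)"
  using assms
proof (induction rule: gen_semigroup.induct)
  case zero
  then show ?case by (intro exI[of _ 0]) simp
next
  case (add x g)
  then obtain k where "k*a \<le> x" "x \<le> k*(a+b)" by blast
  with add.hyps(2) show ?case by (intro exI[of _ "Suc k"]) auto
qed

lemma imp_memS:
  "k*a \<le> x \<Longrightarrow> x \<le> k*(a+b) \<Longrightarrow> x \<in> gen_semigroup {a..a+b}"
proof (induction k arbitrary: x)
  case 0
  then show ?case by (simp add: gen_semigroup.zero)
next
  case (Suc k)
  define g where "g = min (a+b) (x - k*a)"
  have g1: "g \<in> {a..a+b}" using Suc.prems by (auto simp: g_def)
  have "k*a \<le> x - g" "x - g \<le> k*(a+b)" using Suc.prems by (auto simp: g_def min_def)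
  then have "x - g \<in> gen_semigroup {a..a+b}" using Suc.IH by blast
  from gen_semigroup.add[OF this g1] have "x - g + g \<in> gen_semigroup {a..a+b}" .
  moreover have "x - g + g = x" using Suc.prems g1 by (auto simp: g_def min_def)
  ultimately show ?case by simp
qed

lemma memS: "x \<in> gen_semigroup {a..a+b} \<longleftrightarrow> (\<exists>k::nat. k*a \<le> x \<and> x \<le> k*(a+b))"
  using memS_imp imp_memS by blast

lemma big_memS:
  assumes "0 < b" "b < a" "a*a \<le> x"
  shows "x \<in> gen_semigroup {a..a+b}"
proof -
  define k where "k = x div a"
  have "a \<le> k" using assms unfolding k_def
    using div_le_mono[OF assms(3), of a] by simp
  have "k*a \<le> x" unfolding k_def by simp
  moreover have "x < k*a + a"
  proof -
    have "x div a * a + x mod a = x" by (rule div_mult_mod_eq)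
    moreover have "x mod a < a" using assms by simp
    ultimately show ?thesis unfolding k_def by linarith
  qed
  moreover have "a \<le> k*b"
  proof -
    have "k \<le> k*b" using assms(1) by simp
    then show ?thesis using \<open>a \<le> k\<close> by linarith
  qed
  moreover have "k*(a+b) = k*a + k*b" by (simp add: add_mult_distrib2)
  ultimately have "k*a \<le> x" "x \<le> k*(a+b)" by linarith+
  then show ?thesis by (rule imp_memS)
qed

lemma cond_prop:
  assumes "0 < b" "b < a"
  shows "\<forall>n. conductor (gen_semigroup {a..a+b}) + n \<in> gen_semigroup {a..a+b}"
proof -
  have "\<exists>c. c \<in> gen_semigroup {a..a+b} \<and> (\<forall>n. c + n \<in> gen_semigroup {a..a+b})"
    using big_memS[OF assms] by (intro exI[of _ "a*a"]) auto
  from LeastI_ex[OF this] show ?thesis unfolding conductor_def by blast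
qed

lemma run_lemma:
  assumes "0 < b" "b < a" "1 \<le> j"
    and gaps: "\<forall>i<j. y + i \<notin> gen_semigroup {a..a+b}"
    and ins: "y + j \<in> gen_semigroup {a..a+b}"
  shows "\<exists>k. k*b + j < a \<and> y + j = (k+1)*a"
proof -
  obtain K where K: "K*a \<le> y+j" "y+j \<le> K*(a+b)" using ins memS by blast
  have g1: "y + (j-1) \<notin> gen_semigroup {a..a+b}" using gaps[rule_format, of "j-1"] assms(3) by auto
  have "K \<noteq> 0"
  proof
    assume "K = 0" then show False using K(2) assms(3) by simp
  qed
  then obtain k where k: "K = Suc k" by (cases K) auto
  have "\<not> (K*a \<le> y + (j-1))" using g1 memS[of "y+(j-1)"] K assms(3) by force
  then have e: "y + j = K*a" using K assms(3) by linarith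
  have A: "k*(a+b) < K*a"
  proof (rule ccontr)
    assume "\<not> ?thesis"
    moreover have "K*a = k*a + a" using k by simp
    moreover have "k*(a+b) = k*a + k*b" by (simp add: add_mult_distrib2)
    ultimately have "k*a \<le> K*a - 1" "K*a - 1 \<le> k*(a+b)" using assms(2) by linarith+
    then have "K*a - 1 \<in> gen_semigroup {a..a+b}" by (rule imp_memS)
    moreover have "y + (j-1) = K*a - 1" using e assms(3) by simp
    ultimately show False using g1 by simp
  qed
  have "k*(a+b) < y"
  proof (rule ccontr)
    assume "\<not> ?thesis"
    then have "k*(a+b) = y + (k*(a+b) - y)" by simp
    moreover have "k*(a+b) - y < j"
    proof -
      have "k*(a+b) < y + j" using A e by simp
      then show ?thesis using assms(3) by linarith
    qed
    moreover have "k*(a+b) \<in> gen_semigroup {a..a+b}" by (rule imp_memS[of k]) auto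
    ultimately show False using gaps[rule_format, of "k*(a+b) - y"] by simp
  qed
  then have "k*b + j < a" using e k by (simp add: algebra_simps)
  then show ?thesis using e k by auto
qed

lemma gap_lemma:
  assumes "0 < b" "b < a" "k*b + j < a" "(k+1)*a - j \<le> z" "z < (k+1)*a"
  shows "z \<notin> gen_semigroup {a..a+b}"
proof
  assume "z \<in> gen_semigroup {a..a+b}"
  then obtain J where J: "J*a \<le> z" "z \<le> J*(a+b)" using memS by blast
  show False
  proof (cases "J \<le> k")
    case True
    then have "J*(a+b) \<le> k*(a+b)" by simp
    then show ?thesis using J assms by (simp add: algebra_simps)
  next
    case False
    then have "(k+1)*a \<le> J*a" using mult_le_mono1[of "k+1" J a] by simp
    then show ?thesis using J assms by linarith
  qed
qed

lemma card_lt: 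
  assumes "0 < b"
  shows "card {k::nat. k*b + j < a} = (a - j + b - 1) div b"
proof -
  have "{k::nat. k*b + j < a} = {..<(a - j + b - 1) div b}"
  proof (intro set_eqI iffI)
    fix k assume "k \<in> {k::nat. k*b + j < a}"
    then have "Suc k * b \<le> a - j + b - 1" by simp
    then have "\<not> (a - j + b - 1) div b < Suc k" using div_less_iff_less_mult[OF assms] by simp
    then show "k \<in> {..<(a - j + b - 1) div b}" by simp
  next
    fix k assume "k \<in> {..<(a - j + b - 1) div b}"
    then have "\<not> (a - j + b - 1) div b < Suc k" by simp
    then have "\<not> a - j + b - 1 < Suc k * b" using div_less_iff_less_mult[OF assms] by simp
    then show "k \<in> {k::nat. k*b + j < a}" using assms by simp
  qed
  then show ?thesis by simp
qed

lemma ceil_nat: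
  assumes "0 < b"
  shows "nat (ceiling (real n / real b)) = (n + b - 1) div b"
proof -
  define q where "q = (n + b - 1) div b"
  have "(n + b - 1) div b < Suc q" unfolding q_def by simp
  then have "n + b - 1 < Suc q * b" using div_less_iff_less_mult[OF assms] by simp
  then have h1: "n \<le> q * b" by simp
  have "q * b \<le> n + b - 1" unfolding q_def by (rule div_times_less_eq_dividend)
  then have h2: "q * b < n + b" using assms by linarith
  have r1: "real n \<le> real q * real b" using h1 of_nat_le_iff[of n "q*b", where 'a=real] by simp
  have r2: "real q * real b < real n + real b" using h2 of_nat_less_iff[of "q*b" "n+b", where 'a=real] by simp
  have bp: "(0::real) < real b" using assms by simp
  have "real n / real b \<le> real q" using r1 bp by (simp add: pos_divide_le_eq)
  moreover have "real q - 1 < real n / real b"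
  proof -
    have "(real q - 1) * real b < real n" using r2 by (simp add: algebra_simps)
    then show ?thesis by (subst pos_less_divide_eq[OF bp])
  qed
  ultimately have "ceiling (real n / real b) = int q" by (intro ceiling_unique) auto
  then show ?thesis unfolding q_def by simp
qed

lemma cv:
  assumes "0 < b" "1 \<le> j" "j \<le> a + b - 1"
  shows "(a + b - j + b - 1) div b = 1 + (a - j + b - 1) div (b::nat)"
  proof (cases "j \<le> a")
    case True
    have e: "a + b - j + b - 1 = (a - j + b - 1) + b" using True assms by linarith
    have "((a - j + b - 1) + b) div b = (a - j + b - 1) div b + 1"
      using div_add_self2[of b "a - j + b - 1"] assms(1) by linarith
    then show ?thesis unfolding e by linarith
  next
    case False
    then have e1: "a - j + b - 1 = b - 1" by simp
    have e2: "(b - 1) div b = 0" using assms(1) by (simp add: div_less)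
    have "(a + b - j + b - 1) div b = 1"
    proof (rule div_nat_eqI)
      show "b * 1 \<le> a + b - j + b - 1" using False assms by linarith
      have "a + b - j + b - 1 < b + b" using False assms by linarith
      then show "a + b - j + b - 1 < b * Suc 1" by simp
    qed
    then show ?thesis unfolding e1 e2 by linarith
  qed

lemma ceil_val:
  assumes "0 < b" "1 \<le> j" "j \<le> a + b - 1"
  shows "nat (ceiling (real (a + b - j) / real b)) = 1 + (a - j + b - 1) div b"
  using ceil_nat[OF assms(1), of "a + b - j"] cv[OF assms] by simp

theorem corollary4p7:
  fixes a b m t :: nat
  assumes "0 < b" and "b < a"
    and "m \<ge> 2 * conductor (gen_semigroup {a..a+b}) - 1"
    and "1 \<le> t" and "t \<le> a + b - 1"
  shows "card (Dmulti (gen_semigroup {a..a+b}) {m..m+t})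
         = card (Dset (gen_semigroup {a..a+b}) m)
           + (\<Sum>j=1..t. nat (ceiling (real (a + b - j) / real b)))"
proof -
  define S where "S = gen_semigroup {a..a+b}"
  define c where "c = conductor S"
  have allc: "\<And>x. c \<le> x \<Longrightarrow> x \<in> S"
  proof -
    fix x assume "c \<le> x"
    then have "x = c + (x - c)" by simp
    then show "x \<in> S" using cond_prop[OF assms(1,2)] unfolding S_def c_def by metis
  qed
  have zS: "0 \<in> S" unfolding S_def by (rule gen_semigroup.zero)
  have gapc: "\<And>y. y \<notin> S \<Longrightarrow> y < c" using allc by (meson not_le)
  have mc: "2*c \<le> m + 1" using assms(3) unfolding c_def S_def by simp
  define N where "N j = insert (m+j) ((\<lambda>k. m + j - (k+1)*a) ` {k. k*b + j < a})" for j
  have yc: "(k+1)*a - j < c" if "k*b + j < a" "1 \<le> j" for k j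
  proof -
    have "(k+1)*a - j \<notin> S" unfolding S_def
      by (rule gap_lemma[OF assms(1,2) that(1)]) (use that in auto)
    then show ?thesis by (rule gapc)
  qed
  have key: "Dset S (m + Suc s) - Dmulti S {m..m+s} = N (Suc s)" for s
  proof (intro set_eqI iffI)
    fix \<alpha> assume A: "\<alpha> \<in> Dset S (m + Suc s) - Dmulti S {m..m+s}"
    then have aS: "\<alpha> \<in> S" and al: "\<alpha> \<le> m + Suc s" and aR: "m + Suc s - \<alpha> \<in> S"
      and nx: "\<And>x. m \<le> x \<Longrightarrow> x \<le> m + s \<Longrightarrow> \<alpha> \<le> x \<Longrightarrow> x - \<alpha> \<notin> S"
      unfolding Dset_def Dmulti_def by auto
    show "\<alpha> \<in> N (Suc s)"
    proof (cases "m \<le> \<alpha>")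
      case True
      have "\<not> \<alpha> \<le> m + s" using nx[of \<alpha>] True zS by auto
      then have "\<alpha> = m + Suc s" using al by simp
      then show ?thesis unfolding N_def by simp
    next
      case False
      define y where "y = m - \<alpha>"
      have gaps: "\<forall>i<Suc s. y + i \<notin> gen_semigroup {a..a+b}"
      proof (intro allI impI)
        fix i assume "i < Suc s"
        then have "y + i = (m + i) - \<alpha>" using False unfolding y_def by simp
        then show "y + i \<notin> gen_semigroup {a..a+b}"
          using nx[of "m+i"] \<open>i < Suc s\<close> False unfolding S_def by simp
      qed
      have ins: "y + Suc s \<in> gen_semigroup {a..a+b}"
      proof -
        have "y + Suc s = m + Suc s - \<alpha>" using False unfolding y_def by simp
        then show ?thesis using aR unfolding S_def by simp
      qed
      obtain k where k: "k*b + Suc s < a" "y + Suc s = (k+1)*a"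
        using run_lemma[OF assms(1,2) _ gaps ins] by auto
      have "\<alpha> = m + Suc s - (k+1)*a" using k(2) False unfolding y_def by simp
      then show ?thesis unfolding N_def using k(1) by auto
    qed
  next
    fix \<alpha> assume "\<alpha> \<in> N (Suc s)"
    then consider "\<alpha> = m + Suc s" | k where "k*b + Suc s < a" "\<alpha> = m + Suc s - (k+1)*a"
      unfolding N_def by auto
    then show "\<alpha> \<in> Dset S (m + Suc s) - Dmulti S {m..m+s}"
    proof cases
      case 1
      have "\<alpha> \<in> S" using allc mc 1 by simp
      then show ?thesis using 1 zS unfolding Dset_def Dmulti_def by auto
    next
      case (2 k)
      define y where "y = (k+1)*a - Suc s"
      have yc': "y < c" using yc[OF 2(1)] by (simp add: y_def)
      have ya: "(k+1)*a = y + Suc s" using 2(1) unfolding y_def by (simp add: algebra_simps)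
      have am: "\<alpha> = m - y" using 2(2) ya by simp
      have "c \<le> \<alpha>" using am yc' mc by linarith
      then have aS: "\<alpha> \<in> S" by (rule allc)
      have "m + Suc s - \<alpha> = (k+1)*a" using am ya yc' mc by linarith
      moreover have "(k+1)*a \<in> S" unfolding S_def by (rule imp_memS[of "k+1"]) (auto simp: algebra_simps)
      ultimately have aR: "m + Suc s - \<alpha> \<in> S" by simp
      have nx: "x - \<alpha> \<notin> S" if "m \<le> x" "x \<le> m + s" for x
      proof -
        have "x - \<alpha> = y + (x - m)" using am that yc' mc by linarith
        then show ?thesis unfolding S_def using that ya
          by (intro gap_lemma[OF assms(1,2) 2(1)]) auto
      qed
      have "\<alpha> \<le> m + Suc s" using am by simp
      then show ?thesis using aS aR nx unfolding Dset_def Dmulti_def by auto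
    qed
  qed
  have cardN: "card (N j) = 1 + (a - j + b - 1) div b" if "1 \<le> j" for j
  proof -
    have fin: "finite {k. k*b + j < a}"
    proof (rule finite_subset[of _ "{..<a}"])
      show "{k. k*b + j < a} \<subseteq> {..<a}"
      proof
        fix k assume "k \<in> {k. k*b + j < a}"
        then have "k*b < a" by simp
        moreover have "k \<le> k*b" using assms(1) by simp
        ultimately have "k < a" by linarith
        then show "k \<in> {..<a}" by simp
      qed
    qed simp
    have inj: "inj_on (\<lambda>k. m + j - (k+1)*a) {k. k*b + j < a}"
    proof (rule inj_onI)
      fix k1 k2 assume k1: "k1 \<in> {k. k*b + j < a}" and k2: "k2 \<in> {k. k*b + j < a}"
        and e: "m + j - (k1+1)*a = m + j - (k2+1)*a"
      have "(k1+1)*a \<le> m + j" using yc[of k1 j] k1 mc that by simp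
      moreover have "(k2+1)*a \<le> m + j" using yc[of k2 j] k2 mc that by simp
      ultimately have "(k1+1)*a = (k2+1)*a" using e by linarith
      then show "k1 = k2" using assms(2) by simp
    qed
    have nin: "m + j \<notin> (\<lambda>k. m + j - (k+1)*a) ` {k. k*b + j < a}"
      using assms(2) that by auto
    show ?thesis unfolding N_def using fin inj nin card_lt[OF assms(1), of j a]
      by (simp add: card_image)
  qed
  have finD: "finite (Dset S x)" for x
    by (rule finite_subset[of _ "{..x}"]) (auto simp: Dset_def)
  have finM: "finite (Dmulti S X)" if "finite X" for X
    using that finD unfolding Dmulti_def by auto
  have ind: "card (Dmulti S {m..m+s}) = card (Dset S m) + (\<Sum>j=1..s. 1 + (a - j + b - 1) div b)" for s
  proof (induction s)
    case 0
    then show ?case by (simp add: Dmulti_def)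
  next
    case (Suc s)
    have eq: "Dmulti S {m..m + Suc s} = Dmulti S {m..m+s} \<union> (Dset S (m + Suc s) - Dmulti S {m..m+s})"
    proof -
      have "{m..m + Suc s} = insert (m + Suc s) {m..m+s}" by auto
      then show ?thesis unfolding Dmulti_def by auto
    qed
    have "card (Dmulti S {m..m + Suc s}) = card (Dmulti S {m..m+s}) + card (N (Suc s))"
      unfolding eq key[symmetric] by (rule card_Un_disjoint) (auto intro: finM finD)
    then show ?case using Suc.IH cardN[of "Suc s"] by simp
  qed
  have "(\<Sum>j=1..t. nat (ceiling (real (a + b - j) / real b))) = (\<Sum>j=1..t. 1 + (a - j + b - 1) div b)"
    by (rule sum.cong) (use ceil_val[OF assms(1)] assms(5) in auto)
  then show ?thesis using ind[of t] unfolding S_def c_def by simp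
qed

end
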